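(* Let $\mu:I\to\mathbb{N}^*$ be a signature. The set $\mathscr{J}(\Omega_\mu)$ of ideals of $\Omega_\mu$, with the topology induced by the product topology on the power set $\mathfrak P(\Omega_\mu)\cong\{0,1\}^{\Omega_\mu}$, is compact if and only if $\mu^{-1}[\mathbb{N}^*\setminus\{1\}]=\{i\in I:\mu_i\ge 2\}$ is finite.
   Context: A relational structure of signature $\mu$ is $(A;(R_i)_{i\in I})$ with $R_i$ a $\mu_i$-ary relation on $A$; embeddings are injective maps preserving and reflecting all relations. $\Omega_\mu$ is the set of isomorphism types of finite structures of signature $\mu$, ordered by embeddability. An ideal of $\Omega_\mu$ is a non-empty, downward closed, up-directed subset. *)

theory Defs
  imports "HOL-Analysis.Analysis"
begin

text \<open>A finite relational structure of signature mu (indexed by I) with carrier a finite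
  subset of nat: a pair (A, R), where R i is a set of tuples (lists) of length mu i over A
  for i in I, and R i is empty for indices outside I.\<close>

type_synonym 'i struc = "nat set \<times> ('i \<Rightarrow> nat list set)"

definition wf_struc :: "'i set \<Rightarrow> ('i \<Rightarrow> nat) \<Rightarrow> 'i struc \<Rightarrow> bool" where
  "wf_struc I \<mu> S \<longleftrightarrow> finite (fst S) \<and>
     (\<forall>i\<in>I. snd S i \<subseteq> {xs. length xs = \<mu> i \<and> set xs \<subseteq> fst S}) \<and>
     (\<forall>i. i \<notin> I \<longrightarrow> snd S i = {})"

definition is_embedding :: "'i set \<Rightarrow> ('i \<Rightarrow> nat) \<Rightarrow> (nat \<Rightarrow> nat) \<Rightarrow> 'i struc \<Rightarrow> 'i struc \<Rightarrow> bool" where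
  "is_embedding I \<mu> f S T \<longleftrightarrow> inj_on f (fst S) \<and> f ` fst S \<subseteq> fst T \<and>
     (\<forall>i\<in>I. \<forall>xs. length xs = \<mu> i \<and> set xs \<subseteq> fst S \<longrightarrow>
        (xs \<in> snd S i \<longleftrightarrow> map f xs \<in> snd T i))"

definition embeds :: "'i set \<Rightarrow> ('i \<Rightarrow> nat) \<Rightarrow> 'i struc \<Rightarrow> 'i struc \<Rightarrow> bool" where
  "embeds I \<mu> S T \<longleftrightarrow> (\<exists>f. is_embedding I \<mu> f S T)"

definition isomorphic :: "'i set \<Rightarrow> ('i \<Rightarrow> nat) \<Rightarrow> 'i struc \<Rightarrow> 'i struc \<Rightarrow> bool" where
  "isomorphic I \<mu> S T \<longleftrightarrow> (\<exists>f. is_embedding I \<mu> f S T \<and> f ` fst S = fst T)"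

definition Omega :: "'i set \<Rightarrow> ('i \<Rightarrow> nat) \<Rightarrow> 'i struc set set" where
  "Omega I \<mu> = {S. wf_struc I \<mu> S} //
     {(S, T). wf_struc I \<mu> S \<and> wf_struc I \<mu> T \<and> isomorphic I \<mu> S T}"

definition omega_le :: "'i set \<Rightarrow> ('i \<Rightarrow> nat) \<Rightarrow> 'i struc set \<Rightarrow> 'i struc set \<Rightarrow> bool" where
  "omega_le I \<mu> X Y \<longleftrightarrow> (\<exists>S\<in>X. \<exists>T\<in>Y. embeds I \<mu> S T)"

definition is_ideal :: "'i set \<Rightarrow> ('i \<Rightarrow> nat) \<Rightarrow> 'i struc set set \<Rightarrow> bool" where
  "is_ideal I \<mu> D \<longleftrightarrow> D \<subseteq> Omega I \<mu> \<and> D \<noteq> {} \<and>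
     (\<forall>X\<in>D. \<forall>Y\<in>Omega I \<mu>. omega_le I \<mu> Y X \<longrightarrow> Y \<in> D) \<and>
     (\<forall>X\<in>D. \<forall>Y\<in>D. \<exists>Z\<in>D. omega_le I \<mu> X Z \<and> omega_le I \<mu> Y Z)"

definition ideals :: "'i set \<Rightarrow> ('i \<Rightarrow> nat) \<Rightarrow> 'i struc set set set" where
  "ideals I \<mu> = {D. is_ideal I \<mu> D}"

text \<open>Identification of the power set P(Omega) with {0,1}^Omega (bool-valued functions,
  extensional on Omega), carrying the product of discrete topologies.\<close>
definition char_fun :: "'a set \<Rightarrow> 'a set \<Rightarrow> ('a \<Rightarrow> bool)" where
  "char_fun \<Omega> D = restrict (\<lambda>x. x \<in> D) \<Omega>"

definition powerset_topology :: "'a set \<Rightarrow> ('a \<Rightarrow> bool) topology" where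
  "powerset_topology \<Omega> = product_topology (\<lambda>_. discrete_topology (UNIV :: bool set)) \<Omega>"

end

theory Submission
  imports Defs
begin



definition cls :: "'i set \<Rightarrow> ('i \<Rightarrow> nat) \<Rightarrow> 'i struc \<Rightarrow> 'i struc set" where
  "cls I \<mu> S = {T. wf_struc I \<mu> T \<and> isomorphic I \<mu> S T}"

lemma emb_comp:
  assumes f: "is_embedding I \<mu> f S T" and g: "is_embedding I \<mu> g T U"
  shows "is_embedding I \<mu> (g \<circ> f) S U"
  unfolding is_embedding_def
proof (intro conjI ballI allI impI)
  show "inj_on (g \<circ> f) (fst S)" using f g unfolding is_embedding_def
    by (meson comp_inj_on inj_on_subset)
  show "(g \<circ> f) ` fst S \<subseteq> fst U" using f g unfolding is_embedding_def by (auto simp: image_subset_iff)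
  fix i xs assume i: "i \<in> I" and xs: "length xs = \<mu> i \<and> set xs \<subseteq> fst S"
  have 1: "xs \<in> snd S i \<longleftrightarrow> map f xs \<in> snd T i" using f i xs unfolding is_embedding_def by blast
  have "length (map f xs) = \<mu> i \<and> set (map f xs) \<subseteq> fst T" using f xs unfolding is_embedding_def by auto
  then have 2: "map f xs \<in> snd T i \<longleftrightarrow> map g (map f xs) \<in> snd U i" using g i unfolding is_embedding_def by blast
  show "xs \<in> snd S i \<longleftrightarrow> map (g \<circ> f) xs \<in> snd U i" using 1 2 by simp
qed

lemma emb_id: "is_embedding I \<mu> id S S"
  unfolding is_embedding_def by auto

lemma iso_refl: "isomorphic I \<mu> S S"
  unfolding isomorphic_def using emb_id[of I \<mu> S] by (metis id_apply image_id)

lemma iso_sym: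
  assumes "isomorphic I \<mu> S T" shows "isomorphic I \<mu> T S"
proof -
  obtain f where f: "is_embedding I \<mu> f S T" and im: "f ` fst S = fst T"
    using assms unfolding isomorphic_def by blast
  have inj: "inj_on f (fst S)" using f unfolding is_embedding_def by blast
  define g where "g = inv_into (fst S) f"
  have "is_embedding I \<mu> g T S"
    unfolding is_embedding_def
  proof (intro conjI ballI allI impI)
    show "inj_on g (fst T)" unfolding g_def using im by (simp add: inj_on_inv_into)
    show "g ` fst T \<subseteq> fst S" unfolding g_def using im by (auto intro: inv_into_into)
    fix i ys assume i: "i \<in> I" and ys: "length ys = \<mu> i \<and> set ys \<subseteq> fst T"
    have e: "map f (map g ys) = ys" using ys im unfolding g_def
      by (simp add: map_idI f_inv_into_f subset_iff)
    have "length (map g ys) = \<mu> i \<and> set (map g ys) \<subseteq> fst S"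
      using ys im unfolding g_def by (auto intro!: inv_into_into)
    then have "map g ys \<in> snd S i \<longleftrightarrow> map f (map g ys) \<in> snd T i"
      using f i unfolding is_embedding_def by blast
    then show "ys \<in> snd T i \<longleftrightarrow> map g ys \<in> snd S i" using e by simp
  qed
  moreover have "g ` fst T = fst S" unfolding g_def using im inj
    by (metis inv_into_image_cancel order_refl)
  ultimately show ?thesis unfolding isomorphic_def by blast
qed

lemma iso_trans:
  assumes "isomorphic I \<mu> S T" "isomorphic I \<mu> T U" shows "isomorphic I \<mu> S U"
proof -
  obtain f where f: "is_embedding I \<mu> f S T" "f ` fst S = fst T"
    using assms unfolding isomorphic_def by blast
  obtain g where g: "is_embedding I \<mu> g T U" "g ` fst T = fst U"
    using assms unfolding isomorphic_def by blast
  have "(g \<circ> f) ` fst S = fst U" using f g by (metis image_comp)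
  then show ?thesis unfolding isomorphic_def using emb_comp[OF f(1) g(1)] by blast
qed

lemma iso_emb: "isomorphic I \<mu> S T \<Longrightarrow> embeds I \<mu> S T"
  unfolding isomorphic_def embeds_def by blast

lemma embeds_trans: "embeds I \<mu> S T \<Longrightarrow> embeds I \<mu> T U \<Longrightarrow> embeds I \<mu> S U"
  unfolding embeds_def using emb_comp by blast

lemma Omega_iff: "X \<in> Omega I \<mu> \<longleftrightarrow> (\<exists>S. wf_struc I \<mu> S \<and> X = cls I \<mu> S)"
proof -
  have e: "{(S, T). wf_struc I \<mu> S \<and> wf_struc I \<mu> T \<and> isomorphic I \<mu> S T} `` {S} = cls I \<mu> S"
    if "wf_struc I \<mu> S" for S
    using that unfolding cls_def by blast
  show ?thesis
  proof
    assume "X \<in> Omega I \<mu>"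
    then obtain S where S: "wf_struc I \<mu> S"
      "X = {(S, T). wf_struc I \<mu> S \<and> wf_struc I \<mu> T \<and> isomorphic I \<mu> S T} `` {S}"
      unfolding Omega_def quotient_def by blast
    then show "\<exists>S. wf_struc I \<mu> S \<and> X = cls I \<mu> S" using e by blast
  next
    assume "\<exists>S. wf_struc I \<mu> S \<and> X = cls I \<mu> S"
    then obtain S where S: "wf_struc I \<mu> S" "X = cls I \<mu> S" by blast
    then have "X = {(S, T). wf_struc I \<mu> S \<and> wf_struc I \<mu> T \<and> isomorphic I \<mu> S T} `` {S}"
      using e by blast
    then show "X \<in> Omega I \<mu>" unfolding Omega_def quotient_def using S(1) by blast
  qed
qed

lemma cls_self: "wf_struc I \<mu> S \<Longrightarrow> S \<in> cls I \<mu> S"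
  unfolding cls_def using iso_refl by blast

lemma cls_wf: "T \<in> cls I \<mu> S \<Longrightarrow> wf_struc I \<mu> T"
  unfolding cls_def by blast

lemma cls_eq: "T \<in> cls I \<mu> S \<Longrightarrow> cls I \<mu> T = cls I \<mu> S"
  unfolding cls_def using iso_sym iso_trans by blast

lemma Omega_wf: "X \<in> Omega I \<mu> \<Longrightarrow> S \<in> X \<Longrightarrow> wf_struc I \<mu> S"
proof -
  assume "X \<in> Omega I \<mu>" "S \<in> X"
  then obtain S0 where "X = cls I \<mu> S0" using Omega_iff by blast
  then show ?thesis using \<open>S \<in> X\<close> cls_wf by blast
qed

lemma Omega_ne: "X \<in> Omega I \<mu> \<Longrightarrow> \<exists>S. S \<in> X"
proof -
  assume "X \<in> Omega I \<mu>"
  then obtain S0 where "wf_struc I \<mu> S0" "X = cls I \<mu> S0" using Omega_iff by blast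
  then show ?thesis using cls_self by blast
qed

lemma Omega_cls: "X \<in> Omega I \<mu> \<Longrightarrow> S \<in> X \<Longrightarrow> X = cls I \<mu> S"
proof -
  assume "X \<in> Omega I \<mu>" "S \<in> X"
  then obtain S0 where "X = cls I \<mu> S0" using Omega_iff by blast
  then show ?thesis using \<open>S \<in> X\<close> cls_eq by blast
qed

lemma cls_Omega: "wf_struc I \<mu> S \<Longrightarrow> cls I \<mu> S \<in> Omega I \<mu>"
  using Omega_iff by blast

lemma Omega_iso: "X \<in> Omega I \<mu> \<Longrightarrow> S \<in> X \<Longrightarrow> T \<in> X \<Longrightarrow> isomorphic I \<mu> S T"
proof -
  assume a: "X \<in> Omega I \<mu>" "S \<in> X" "T \<in> X"
  then have "X = cls I \<mu> S" using Omega_cls by blast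
  then show ?thesis using a(3) unfolding cls_def by blast
qed

lemma omega_le_iff:
  assumes "X \<in> Omega I \<mu>" "Y \<in> Omega I \<mu>" "S \<in> X" "T \<in> Y"
  shows "omega_le I \<mu> X Y \<longleftrightarrow> embeds I \<mu> S T"
proof
  assume "omega_le I \<mu> X Y"
  then obtain S' T' where "S' \<in> X" "T' \<in> Y" "embeds I \<mu> S' T'" unfolding omega_le_def by blast
  then have "isomorphic I \<mu> S S'" "isomorphic I \<mu> T' T" using assms Omega_iso by blast+
  then have "embeds I \<mu> S S'" "embeds I \<mu> T' T" using iso_emb by blast+
  then show "embeds I \<mu> S T"
    using \<open>embeds I \<mu> S' T'\<close> embeds_trans by blast
next
  assume "embeds I \<mu> S T" then show "omega_le I \<mu> X Y" using assms unfolding omega_le_def by blast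
qed

lemma omega_le_trans:
  assumes "X \<in> Omega I \<mu>" "Y \<in> Omega I \<mu>" "Z \<in> Omega I \<mu>"
    "omega_le I \<mu> X Y" "omega_le I \<mu> Y Z"
  shows "omega_le I \<mu> X Z"
proof -
  obtain S T U where "S \<in> X" "T \<in> Y" "U \<in> Z" using Omega_ne[OF assms(1)] Omega_ne[OF assms(2)] Omega_ne[OF assms(3)] by blast
  then have "embeds I \<mu> S T" "embeds I \<mu> T U" using assms omega_le_iff by blast+
  then have "embeds I \<mu> S U" using embeds_trans by blast
  then show ?thesis using assms \<open>S \<in> X\<close> \<open>U \<in> Z\<close> omega_le_iff by blast
qed

lemma omega_le_refl:
  assumes "X \<in> Omega I \<mu>" shows "omega_le I \<mu> X X"
proof -
  obtain S where "S \<in> X" using assms Omega_ne by blast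
  moreover have "embeds I \<mu> S S" using iso_emb iso_refl by blast
  ultimately show ?thesis unfolding omega_le_def by blast
qed




lemma topspace_P: "topspace (powerset_topology \<Omega>) = PiE \<Omega> (\<lambda>_. UNIV)"
  unfolding powerset_topology_def by simp

lemma closed_coord: "closedin (powerset_topology \<Omega>) {f \<in> topspace (powerset_topology \<Omega>). f x = b}"
proof (cases "x \<in> \<Omega>")
  case True
  have "continuous_map (powerset_topology \<Omega>) (discrete_topology UNIV) (\<lambda>f. f x)"
    unfolding powerset_topology_def using True by (rule continuous_map_product_projection)
  from closedin_continuous_map_preimage[OF this, of "{b}"] show ?thesis by simp
next
  case False
  then have *: "\<forall>f \<in> topspace (powerset_topology \<Omega>). f x = undefined" by (auto simp: topspace_P PiE_def extensional_def)
  show ?thesis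
  proof (cases "b = undefined")
    case True
    then have "{f \<in> topspace (powerset_topology \<Omega>). f x = b} = topspace (powerset_topology \<Omega>)"
      using * by blast
    then show ?thesis by (metis closedin_topspace)
  next
    case False
    then have "{f \<in> topspace (powerset_topology \<Omega>). f x = b} = {}"
      using * by blast
    then show ?thesis by (metis closedin_empty)
  qed
qed

lemma compact_P: "compact_space (powerset_topology \<Omega>)"
  unfolding powerset_topology_def compact_space_product_topology
  by (simp add: compact_space_discrete_topology)

lemma Hausdorff_P: "Hausdorff_space (powerset_topology \<Omega>)"
  unfolding powerset_topology_def Hausdorff_space_product_topology by simp

lemma char_in: "char_fun \<Omega> D \<in> topspace (powerset_topology \<Omega>)"
  unfolding topspace_P char_fun_def by simp

lemma char_app: "x \<in> \<Omega> \<Longrightarrow> char_fun \<Omega> D x = (x \<in> D)"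
  unfolding char_fun_def by simp

lemma char_inj: "D \<subseteq> \<Omega> \<Longrightarrow> D' \<subseteq> \<Omega> \<Longrightarrow> char_fun \<Omega> D = char_fun \<Omega> D' \<Longrightarrow> D = D'"
proof (rule set_eqI)
  fix x assume a: "D \<subseteq> \<Omega>" "D' \<subseteq> \<Omega>" "char_fun \<Omega> D = char_fun \<Omega> D'"
  show "x \<in> D \<longleftrightarrow> x \<in> D'"
  proof (cases "x \<in> \<Omega>")
    case True
    then show ?thesis using a(3) char_app[OF True, of D] char_app[OF True, of D'] by simp
  next
    case False
    then show ?thesis using a by blast
  qed
qed

lemma top_char: "f \<in> topspace (powerset_topology \<Omega>) \<Longrightarrow> f = char_fun \<Omega> {x\<in>\<Omega>. f x}"
proof (rule ext)
  fix x assume f: "f \<in> topspace (powerset_topology \<Omega>)"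
  show "f x = char_fun \<Omega> {x\<in>\<Omega>. f x} x"
  proof (cases "x \<in> \<Omega>")
    case True then show ?thesis by (simp add: char_app)
  next
    case False
    have f': "f \<in> PiE \<Omega> (\<lambda>_. UNIV)" using f unfolding topspace_P .
    have "f x = undefined" by (rule PiE_arb[OF f' False])
    then show ?thesis using False unfolding char_fun_def by simp
  qed
qed




definition restr :: "'i struc \<Rightarrow> nat set \<Rightarrow> 'i struc" where
  "restr S B = (B, \<lambda>i. {xs\<in>snd S i. set xs \<subseteq> B})"

definition img :: "(nat \<Rightarrow> nat) \<Rightarrow> 'i struc \<Rightarrow> 'i struc" where
  "img h S = (h ` fst S, \<lambda>i. map h ` snd S i)"

lemma wf_restr: "wf_struc I \<mu> S \<Longrightarrow> B \<subseteq> fst S \<Longrightarrow> wf_struc I \<mu> (restr S B)"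
  unfolding wf_struc_def restr_def by (auto intro: finite_subset)

lemma emb_restr_id: "B \<subseteq> fst S \<Longrightarrow> is_embedding I \<mu> id (restr S B) S"
  unfolding is_embedding_def restr_def by auto

lemma emb_into_restr:
  assumes "is_embedding I \<mu> f S T" "f ` fst S \<subseteq> B"
  shows "is_embedding I \<mu> f S (restr T B)"
  using assms unfolding is_embedding_def restr_def
  by (auto simp: image_subset_iff)

lemma wf_img: "wf_struc I \<mu> S \<Longrightarrow> wf_struc I \<mu> (img h S)"
  unfolding wf_struc_def img_def by fastforce

lemma iso_img:
  assumes wf: "wf_struc I \<mu> S" and inj: "inj_on h (fst S)"
  shows "isomorphic I \<mu> S (img h S)"
proof -
  have "is_embedding I \<mu> h S (img h S)"
    unfolding is_embedding_def
  proof (intro conjI ballI allI impI)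
    show "inj_on h (fst S)" by (rule inj)
    show "h ` fst S \<subseteq> fst (img h S)" unfolding img_def by simp
    fix i xs assume i: "i \<in> I" and xs: "length xs = \<mu> i \<and> set xs \<subseteq> fst S"
    show "xs \<in> snd S i \<longleftrightarrow> map h xs \<in> snd (img h S) i"
    proof
      assume "xs \<in> snd S i" then show "map h xs \<in> snd (img h S) i" unfolding img_def by simp
    next
      assume "map h xs \<in> snd (img h S) i"
      then obtain ys where ys: "ys \<in> snd S i" "map h xs = map h ys" unfolding img_def by auto
      have "set ys \<subseteq> fst S" using ys(1) wf i unfolding wf_struc_def by blast
      then have "inj_on h (set xs \<union> set ys)" using xs inj by (meson Un_least inj_on_subset)
      then have "xs = ys" using ys(2) by (simp add: inj_on_map_eq_map)
      then show "xs \<in> snd S i" using ys by simp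
    qed
  qed
  then show ?thesis unfolding isomorphic_def img_def by auto
qed

context
  fixes I :: "'i set" and \<mu> :: "'i \<Rightarrow> nat"
begin

definition mkS :: "'i struc \<Rightarrow> 'i struc \<Rightarrow> nat set \<Rightarrow> (nat \<Rightarrow> nat) \<Rightarrow> (nat \<Rightarrow> nat) \<Rightarrow> ('i \<Rightarrow> nat list set) \<Rightarrow> 'i struc" where
  "mkS SX SY A f g R = (A, \<lambda>i. if i \<in> I then (if 2 \<le> \<mu> i then R i else map f ` snd SX i \<union> map g ` snd SY i) else {})"

definition Cand :: "'i struc \<Rightarrow> 'i struc \<Rightarrow> 'i struc set" where
  "Cand SX SY = (let n = card (fst SX) + card (fst SY) in
     (\<lambda>(A,f,g,R). mkS SX SY A f g R) ` (Pow {..<n} \<times> PiE (fst SX) (\<lambda>_. {..<n}) \<times> PiE (fst SY) (\<lambda>_. {..<n})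
        \<times> PiE {i\<in>I. 2 \<le> \<mu> i} (\<lambda>i. Pow {xs. set xs \<subseteq> {..<n} \<and> length xs = \<mu> i})))"

lemma finite_Cand:
  assumes "finite (fst SX)" "finite (fst SY)" "finite {i\<in>I. 2 \<le> \<mu> i}"
  shows "finite (Cand SX SY)"
  unfolding Cand_def Let_def using assms
  by (intro finite_imageI finite_cartesian_product finite_PiE) (auto intro: finite_lists_length_eq)

definition rep :: "'i struc set \<Rightarrow> 'i struc" where
  "rep X = (SOME S. S \<in> X)"

lemma rep_in: "X \<in> Omega I \<mu> \<Longrightarrow> rep X \<in> X"
  unfolding rep_def using Omega_ne by (metis someI_ex)

definition CC :: "'i struc set \<Rightarrow> 'i struc set \<Rightarrow> 'i struc set set" where
  "CC X Y = {W \<in> Omega I \<mu>. omega_le I \<mu> X W \<and> omega_le I \<mu> Y W \<and> W \<inter> Cand (rep X) (rep Y) \<noteq> {}}"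

lemma finite_CC:
  assumes "X \<in> Omega I \<mu>" "Y \<in> Omega I \<mu>" "finite {i\<in>I. 2 \<le> \<mu> i}"
  shows "finite (CC X Y)"
proof -
  have "finite (fst (rep X))" "finite (fst (rep Y))"
    using assms rep_in Omega_wf unfolding wf_struc_def by blast+
  then have fin: "finite (Cand (rep X) (rep Y))" using finite_Cand assms(3) by blast
  have "CC X Y \<subseteq> cls I \<mu> ` Cand (rep X) (rep Y)"
  proof
    fix W assume "W \<in> CC X Y"
    then obtain T where "W \<in> Omega I \<mu>" "T \<in> W" "T \<in> Cand (rep X) (rep Y)" unfolding CC_def by blast
    then show "W \<in> cls I \<mu> ` Cand (rep X) (rep Y)" using Omega_cls by blast
  qed
  then show ?thesis using fin finite_surj by blast
qed

lemma CC_props: "W \<in> CC X Y \<Longrightarrow> W \<in> Omega I \<mu> \<and> omega_le I \<mu> X W \<and> omega_le I \<mu> Y W"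
  unfolding CC_def by blast

lemma key_CC:
  assumes mu: "\<forall>i\<in>I. \<mu> i \<ge> 1"
    and X: "X \<in> Omega I \<mu>" and Y: "Y \<in> Omega I \<mu>" and Z: "Z \<in> Omega I \<mu>"
    and XZ: "omega_le I \<mu> X Z" and YZ: "omega_le I \<mu> Y Z"
  shows "\<exists>W\<in>CC X Y. omega_le I \<mu> W Z"
proof -
  define SX where "SX = rep X"
  define SY where "SY = rep Y"
  define SZ where "SZ = rep Z"
  have inX: "SX \<in> X" and inY: "SY \<in> Y" and inZ: "SZ \<in> Z"
    using rep_in X Y Z unfolding SX_def SY_def SZ_def by auto
  have wfX: "wf_struc I \<mu> SX" and wfY: "wf_struc I \<mu> SY" and wfZ: "wf_struc I \<mu> SZ"
    using inX inY inZ X Y Z Omega_wf by blast+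
  obtain f where f: "is_embedding I \<mu> f SX SZ"
    using omega_le_iff[OF X Z inX inZ] XZ unfolding embeds_def by blast
  obtain g where g: "is_embedding I \<mu> g SY SZ"
    using omega_le_iff[OF Y Z inY inZ] YZ unfolding embeds_def by blast
  define n where "n = card (fst SX) + card (fst SY)"
  define B where "B = f ` fst SX \<union> g ` fst SY"
  have finX: "finite (fst SX)" and finY: "finite (fst SY)"
    using wfX wfY unfolding wf_struc_def by auto
  have finB: "finite B" unfolding B_def using finX finY by simp
  have BZ: "B \<subseteq> fst SZ" unfolding B_def using f g unfolding is_embedding_def by blast
  have cardB: "card B \<le> n" unfolding B_def n_def
    by (meson add_mono card_Un_le card_image_le finX finY order_trans)
  obtain h where h: "bij_betw h B {0..<card B}" using ex_bij_betw_finite_nat[OF finB] by blast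
  define M where "M = restr SZ B"
  define T where "T = img h M"
  have wfM: "wf_struc I \<mu> M" unfolding M_def using wf_restr[OF wfZ BZ] .
  have fstM: "fst M = B" unfolding M_def restr_def by simp
  have injh: "inj_on h (fst M)" using h fstM unfolding bij_betw_def by simp
  have isoMT: "isomorphic I \<mu> M T" unfolding T_def using iso_img[OF wfM injh] .
  have wfT: "wf_struc I \<mu> T" unfolding T_def using wf_img[OF wfM] .
  have fstT: "fst T = {0..<card B}" unfolding T_def img_def using h fstM unfolding bij_betw_def by simp
  define W where "W = cls I \<mu> T"
  have W: "W \<in> Omega I \<mu>" unfolding W_def using cls_Omega[OF wfT] .
  have TW: "T \<in> W" unfolding W_def using cls_self[OF wfT] .
  have "embeds I \<mu> SX T"
  proof -
    have "is_embedding I \<mu> f SX M" unfolding M_def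
      by (rule emb_into_restr[OF f]) (auto simp: B_def)
    moreover obtain k where "is_embedding I \<mu> k M T" using isoMT unfolding isomorphic_def by blast
    ultimately show ?thesis unfolding embeds_def using emb_comp by blast
  qed
  then have XW: "omega_le I \<mu> X W" using omega_le_iff[OF X W inX TW] by simp
  have "embeds I \<mu> SY T"
  proof -
    have "is_embedding I \<mu> g SY M" unfolding M_def
      by (rule emb_into_restr[OF g]) (auto simp: B_def)
    moreover obtain k where "is_embedding I \<mu> k M T" using isoMT unfolding isomorphic_def by blast
    ultimately show ?thesis unfolding embeds_def using emb_comp by blast
  qed
  then have YW: "omega_le I \<mu> Y W" using omega_le_iff[OF Y W inY TW] by simp
  have "embeds I \<mu> T SZ"
  proof -
    obtain k where "is_embedding I \<mu> k T M" using iso_sym[OF isoMT] unfolding isomorphic_def by blast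
    moreover have "is_embedding I \<mu> id M SZ" unfolding M_def using emb_restr_id[OF BZ] .
    ultimately show ?thesis unfolding embeds_def using emb_comp by blast
  qed
  then have WZ: "omega_le I \<mu> W Z" using omega_le_iff[OF W Z TW inZ] by simp
  define J where "J = {i\<in>I. 2 \<le> \<mu> i}"
  define f' where "f' = restrict (h \<circ> f) (fst SX)"
  define g' where "g' = restrict (h \<circ> g) (fst SY)"
  define R where "R = restrict (snd T) J"
  have sndT: "snd T i = map h ` {xs \<in> snd SZ i. set xs \<subseteq> B}" for i
    unfolding T_def M_def img_def restr_def by simp
  have Teq: "T = mkS SX SY (fst T) f' g' R"
  proof (rule prod_eqI)
    show "fst T = fst (mkS SX SY (fst T) f' g' R)" unfolding mkS_def by simp
    show "snd T = snd (mkS SX SY (fst T) f' g' R)"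
    proof (rule ext)
      fix i
      show "snd T i = snd (mkS SX SY (fst T) f' g' R) i"
      proof (cases "i \<in> I")
        case False
        then show ?thesis using wfT unfolding wf_struc_def mkS_def by simp
      next
        case iI: True
        show ?thesis
        proof (cases "2 \<le> \<mu> i")
          case True
          then show ?thesis unfolding mkS_def R_def J_def using iI by simp
        next
          case False
          then have mu1: "\<mu> i = 1" using mu iI by force
          have e1: "map f' ` snd SX i = map (h \<circ> f) ` snd SX i"
          proof (rule image_cong[OF refl])
            fix xs assume "xs \<in> snd SX i"
            then have "set xs \<subseteq> fst SX" using wfX iI unfolding wf_struc_def by blast
            then show "map f' xs = map (h \<circ> f) xs" unfolding f'_def by (auto simp: subset_iff)
          qed
          have e2: "map g' ` snd SY i = map (h \<circ> g) ` snd SY i"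
          proof (rule image_cong[OF refl])
            fix xs assume "xs \<in> snd SY i"
            then have "set xs \<subseteq> fst SY" using wfY iI unfolding wf_struc_def by blast
            then show "map g' xs = map (h \<circ> g) xs" unfolding g'_def by (auto simp: subset_iff)
          qed
          have core: "{xs \<in> snd SZ i. set xs \<subseteq> B} = map f ` snd SX i \<union> map g ` snd SY i"
          proof
            show "{xs \<in> snd SZ i. set xs \<subseteq> B} \<subseteq> map f ` snd SX i \<union> map g ` snd SY i"
            proof
              fix xs assume xs: "xs \<in> {xs \<in> snd SZ i. set xs \<subseteq> B}"
              then have "length xs = 1" using wfZ iI mu1 unfolding wf_struc_def by force
              then obtain z where z: "xs = [z]" by (metis One_nat_def length_0_conv length_Suc_conv)
              then have "z \<in> B" using xs by simp
              then consider b where "b \<in> fst SX" "z = f b" | c where "c \<in> fst SY" "z = g c"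
                unfolding B_def by blast
              then show "xs \<in> map f ` snd SX i \<union> map g ` snd SY i"
              proof cases
                case 1
                have "[b] \<in> snd SX i \<longleftrightarrow> map f [b] \<in> snd SZ i"
                  using f iI 1 mu1 unfolding is_embedding_def by simp
                then have "[b] \<in> snd SX i" using xs z 1 by simp
                then show ?thesis using z 1 by (metis UnI1 image_eqI list.simps(8,9))
              next
                case 2
                have "[c] \<in> snd SY i \<longleftrightarrow> map g [c] \<in> snd SZ i"
                  using g iI 2 mu1 unfolding is_embedding_def by simp
                then have "[c] \<in> snd SY i" using xs z 2 by simp
                then show ?thesis using z 2 by (metis UnI2 image_eqI list.simps(8,9))
              qed
            qed
          next
            show "map f ` snd SX i \<union> map g ` snd SY i \<subseteq> {xs \<in> snd SZ i. set xs \<subseteq> B}"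
            proof
              fix ys assume "ys \<in> map f ` snd SX i \<union> map g ` snd SY i"
              then consider xs where "xs \<in> snd SX i" "ys = map f xs" | xs where "xs \<in> snd SY i" "ys = map g xs"
                by blast
              then show "ys \<in> {xs \<in> snd SZ i. set xs \<subseteq> B}"
              proof cases
                case 1
                then have "length xs = \<mu> i \<and> set xs \<subseteq> fst SX" using wfX iI unfolding wf_struc_def by blast
                then have "map f xs \<in> snd SZ i" "set (map f xs) \<subseteq> B"
                  using f iI 1 unfolding is_embedding_def B_def by auto
                then show ?thesis using 1 by simp
              next
                case 2
                then have "length xs = \<mu> i \<and> set xs \<subseteq> fst SY" using wfY iI unfolding wf_struc_def by blast
                then have "map g xs \<in> snd SZ i" "set (map g xs) \<subseteq> B"
                  using g iI 2 unfolding is_embedding_def B_def by auto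
                then show ?thesis using 2 by simp
              qed
            qed
          qed
          have "snd T i = map h ` (map f ` snd SX i \<union> map g ` snd SY i)" using sndT core by simp
          also have "\<dots> = map (h \<circ> f) ` snd SX i \<union> map (h \<circ> g) ` snd SY i"
            by (simp add: image_Un image_image)
          finally show ?thesis unfolding mkS_def using iI False e1 e2 by simp
        qed
      qed
    qed
  qed
  have memb: "(fst T, f', g', R) \<in> Pow {..<n} \<times> PiE (fst SX) (\<lambda>_. {..<n}) \<times> PiE (fst SY) (\<lambda>_. {..<n})
        \<times> PiE J (\<lambda>i. Pow {xs. set xs \<subseteq> {..<n} \<and> length xs = \<mu> i})"
  proof -
    have T1: "fst T \<subseteq> {..<n}" using fstT cardB by auto
    have hB: "h ` B \<subseteq> {..<n}" using h cardB unfolding bij_betw_def by auto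
    have "f' \<in> PiE (fst SX) (\<lambda>_. {..<n})" unfolding f'_def using hB B_def by (auto simp: image_subset_iff)
    moreover have "g' \<in> PiE (fst SY) (\<lambda>_. {..<n})" unfolding g'_def using hB B_def by (auto simp: image_subset_iff)
    moreover have "R \<in> PiE J (\<lambda>i. Pow {xs. set xs \<subseteq> {..<n} \<and> length xs = \<mu> i})"
      unfolding R_def J_def using wfT T1 unfolding wf_struc_def by auto
    ultimately show ?thesis using T1 by simp
  qed
  have "T \<in> Cand SX SY"
    unfolding Cand_def Let_def n_def[symmetric] J_def[symmetric]
    using memb Teq by (metis (no_types, lifting) case_prod_conv image_eqI)
  then have "W \<in> CC X Y" unfolding CC_def using W XW YW TW SX_def SY_def by blast
  then show ?thesis using WZ by blast
qed

end




lemma closed_all: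
  assumes "\<And>a. a \<in> A \<Longrightarrow> closedin P {f\<in>topspace P. Q a f}"
  shows "closedin P {f\<in>topspace P. \<forall>a\<in>A. Q a f}"
proof (cases "A = {}")
  case True then show ?thesis by simp
next
  case False
  have "{f\<in>topspace P. \<forall>a\<in>A. Q a f} = (\<Inter>a\<in>A. {f\<in>topspace P. Q a f})" using False by auto
  moreover have "closedin P (\<Inter>a\<in>A. {f\<in>topspace P. Q a f})" using False assms by (intro closedin_INT) auto
  ultimately show ?thesis by simp
qed

definition Emp :: "'i struc" where "Emp = ({}, \<lambda>_. {})"

lemma wf_Emp: "wf_struc I \<mu> Emp" unfolding wf_struc_def Emp_def by simp

lemma emb_Emp:
  assumes "\<forall>i\<in>I. \<mu> i \<ge> 1" shows "is_embedding I \<mu> f Emp T"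
  unfolding is_embedding_def Emp_def using assms by fastforce

lemma E_le:
  assumes mu: "\<forall>i\<in>I. \<mu> i \<ge> 1" and W: "W \<in> Omega I \<mu>"
  shows "omega_le I \<mu> (cls I \<mu> Emp) W"
proof -
  obtain S where "S \<in> W" using Omega_ne W by blast
  then show ?thesis unfolding omega_le_def embeds_def
    using cls_self[OF wf_Emp] emb_Emp[OF mu] by blast
qed

lemma E_Omega: "cls I \<mu> Emp \<in> Omega I \<mu>" using cls_Omega wf_Emp by blast

lemma ideals_closed:
  assumes mu: "\<forall>i\<in>I. \<mu> i \<ge> 1" and finJ: "finite {i\<in>I. 2 \<le> \<mu> i}"
  shows "closedin (powerset_topology (Omega I \<mu>)) (char_fun (Omega I \<mu>) ` ideals I \<mu>)"
proof -
  define \<Omega> where "\<Omega> = Omega I \<mu>"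
  define P where "P = powerset_topology \<Omega>"
  define E where "E = cls I \<mu> Emp"
  have EO: "E \<in> \<Omega>" unfolding E_def \<Omega>_def by (rule E_Omega)
  define Dn where "Dn = {(X,Y). X \<in> \<Omega> \<and> Y \<in> \<Omega> \<and> omega_le I \<mu> Y X}"
  define K where "K = {f \<in> topspace P. f E \<and> (\<forall>p\<in>Dn. \<not> f (fst p) \<or> f (snd p))
      \<and> (\<forall>p\<in>\<Omega>\<times>\<Omega>. \<not> f (fst p) \<or> \<not> f (snd p) \<or> (\<exists>Z\<in>CC I \<mu> (fst p) (snd p). f Z))}"
  have cc: "closedin P {f\<in>topspace P. f x = b}" for x b unfolding P_def by (rule closed_coord)
  have ccT: "closedin P {f\<in>topspace P. f x}" for x using cc[of x True] by simp
  have c1: "closedin P {f\<in>topspace P. f E}" using cc[of E True] by simp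
  have c2: "closedin P {f\<in>topspace P. \<forall>p\<in>Dn. \<not> f (fst p) \<or> f (snd p)}"
  proof (rule closed_all)
    fix p
    have "{f\<in>topspace P. \<not> f (fst p) \<or> f (snd p)} = {f\<in>topspace P. f (fst p) = False} \<union> {f\<in>topspace P. f (snd p) = True}"
      by auto
    then show "closedin P {f\<in>topspace P. \<not> f (fst p) \<or> f (snd p)}"
      using closedin_Un[OF cc[of "fst p" False] cc[of "snd p" True]] by simp
  qed
  have c3: "closedin P {f\<in>topspace P. \<forall>p\<in>\<Omega>\<times>\<Omega>. \<not> f (fst p) \<or> \<not> f (snd p) \<or> (\<exists>Z\<in>CC I \<mu> (fst p) (snd p). f Z)}"
  proof (rule closed_all)
    fix p assume p: "p \<in> \<Omega>\<times>\<Omega>"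
    have fin: "finite (CC I \<mu> (fst p) (snd p))" using finite_CC[of "fst p" I \<mu>] p finJ unfolding \<Omega>_def by (simp add: mem_Times_iff)
    have "{f\<in>topspace P. \<not> f (fst p) \<or> \<not> f (snd p) \<or> (\<exists>Z\<in>CC I \<mu> (fst p) (snd p). f Z)} =
       {f\<in>topspace P. f (fst p) = False} \<union> {f\<in>topspace P. f (snd p) = False} \<union>
       \<Union> ((\<lambda>Z. {f\<in>topspace P. f Z = True}) ` CC I \<mu> (fst p) (snd p))"
      by auto
    moreover have "closedin P (\<Union> ((\<lambda>Z. {f\<in>topspace P. f Z = True}) ` CC I \<mu> (fst p) (snd p)))"
      using fin ccT by (intro closedin_Union) auto
    ultimately show "closedin P {f\<in>topspace P. \<not> f (fst p) \<or> \<not> f (snd p) \<or> (\<exists>Z\<in>CC I \<mu> (fst p) (snd p). f Z)}"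
      using closedin_Un[OF closedin_Un[OF cc[of "fst p" False] cc[of "snd p" False]]] by simp
  qed
  have "K = {f\<in>topspace P. f E} \<inter> {f\<in>topspace P. \<forall>p\<in>Dn. \<not> f (fst p) \<or> f (snd p)} \<inter>
     {f\<in>topspace P. \<forall>p\<in>\<Omega>\<times>\<Omega>. \<not> f (fst p) \<or> \<not> f (snd p) \<or> (\<exists>Z\<in>CC I \<mu> (fst p) (snd p). f Z)}"
    unfolding K_def by blast
  then have cK: "closedin P K" using closedin_Int[OF closedin_Int[OF c1 c2] c3] by simp
  have "char_fun \<Omega> ` ideals I \<mu> = K"
  proof
    show "char_fun \<Omega> ` ideals I \<mu> \<subseteq> K"
    proof
      fix f assume "f \<in> char_fun \<Omega> ` ideals I \<mu>"
      then obtain D where D: "is_ideal I \<mu> D" and fD: "f = char_fun \<Omega> D" unfolding ideals_def by blast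
      have DO: "D \<subseteq> \<Omega>" and Dne: "D \<noteq> {}"
        and Ddown: "\<forall>X\<in>D. \<forall>Y\<in>\<Omega>. omega_le I \<mu> Y X \<longrightarrow> Y \<in> D"
        and Ddir: "\<forall>X\<in>D. \<forall>Y\<in>D. \<exists>Z\<in>D. omega_le I \<mu> X Z \<and> omega_le I \<mu> Y Z"
        using D unfolding is_ideal_def \<Omega>_def by auto
      have fa: "x \<in> \<Omega> \<Longrightarrow> f x = (x \<in> D)" for x using fD char_app by metis
      have "f \<in> topspace P" unfolding fD P_def by (rule char_in)
      moreover have "f E"
      proof -
        obtain X where "X \<in> D" using Dne by blast
        then have "E \<in> D" using Ddown EO DO E_le[OF mu] unfolding E_def \<Omega>_def by blast
        then show ?thesis using fa EO by simp
      qed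
      moreover have "\<forall>p\<in>Dn. \<not> f (fst p) \<or> f (snd p)"
        unfolding Dn_def using fa Ddown by auto
      moreover have "\<forall>p\<in>\<Omega>\<times>\<Omega>. \<not> f (fst p) \<or> \<not> f (snd p) \<or> (\<exists>Z\<in>CC I \<mu> (fst p) (snd p). f Z)"
      proof
        fix p assume p: "p \<in> \<Omega>\<times>\<Omega>"
        obtain X Y where XY: "p = (X,Y)" by force
        have X: "X \<in> \<Omega>" and Y: "Y \<in> \<Omega>" using p XY by auto
        show "\<not> f (fst p) \<or> \<not> f (snd p) \<or> (\<exists>Z\<in>CC I \<mu> (fst p) (snd p). f Z)"
        proof (cases "f X \<and> f Y")
          case True
          then have "X \<in> D" "Y \<in> D" using fa X Y by auto
          then obtain Z where Z: "Z \<in> D" "omega_le I \<mu> X Z" "omega_le I \<mu> Y Z" using Ddir by blast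
          then obtain W where W: "W \<in> CC I \<mu> X Y" "omega_le I \<mu> W Z"
            using key_CC[OF mu, of X Y Z] X Y DO unfolding \<Omega>_def by blast
          then have "W \<in> \<Omega>" using CC_props unfolding \<Omega>_def by blast
          then have "W \<in> D" using Ddown Z W by blast
          then have "f W" using fa \<open>W \<in> \<Omega>\<close> by simp
          then show ?thesis using W XY by auto
        next
          case False then show ?thesis using XY by auto
        qed
      qed
      ultimately show "f \<in> K" unfolding K_def by blast
    qed
  next
    show "K \<subseteq> char_fun \<Omega> ` ideals I \<mu>"
    proof
      fix f assume fK: "f \<in> K"
      define D where "D = {x\<in>\<Omega>. f x}"
      have fD: "f = char_fun \<Omega> D" unfolding D_def using fK top_char unfolding K_def P_def by blast
      have "is_ideal I \<mu> D"
        unfolding is_ideal_def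
      proof (intro conjI ballI impI)
        show "D \<subseteq> Omega I \<mu>" unfolding D_def \<Omega>_def by blast
        show "D \<noteq> {}" using fK EO unfolding K_def D_def by blast
        fix X Y assume X: "X \<in> D" and Y: "Y \<in> Omega I \<mu>" and le: "omega_le I \<mu> Y X"
        then have "(X,Y) \<in> Dn" unfolding Dn_def D_def \<Omega>_def by blast
        then show "Y \<in> D" using fK X Y unfolding K_def D_def \<Omega>_def by fastforce
      next
        fix X Y assume X: "X \<in> D" and Y: "Y \<in> D"
        then have "(X,Y) \<in> \<Omega>\<times>\<Omega>" "f X" "f Y" unfolding D_def by auto
        then obtain Z where Z: "Z \<in> CC I \<mu> X Y" "f Z" using fK unfolding K_def by fastforce
        then have "Z \<in> D" using CC_props unfolding D_def \<Omega>_def by blast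
        then show "\<exists>Z\<in>D. omega_le I \<mu> X Z \<and> omega_le I \<mu> Y Z" using Z CC_props by blast
      qed
      then show "f \<in> char_fun \<Omega> ` ideals I \<mu>" using fD unfolding ideals_def by blast
    qed
  qed
  then show ?thesis using cK unfolding P_def \<Omega>_def by simp
qed




lemma emb_sub:
  assumes "is_embedding I \<mu> f S T" "f ` fst S \<subseteq> fst T'"
    "\<forall>i\<in>I. \<forall>ys. length ys = \<mu> i \<and> set ys \<subseteq> fst T' \<longrightarrow> (ys \<in> snd T i \<longleftrightarrow> ys \<in> snd T' i)"
  shows "is_embedding I \<mu> f S T'"
  unfolding is_embedding_def
proof (intro conjI ballI allI impI)
  show "inj_on f (fst S)" using assms(1) unfolding is_embedding_def by blast
  show "f ` fst S \<subseteq> fst T'" by (rule assms(2))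
  fix i xs assume i: "i \<in> I" and xs: "length xs = \<mu> i \<and> set xs \<subseteq> fst S"
  have 1: "xs \<in> snd S i \<longleftrightarrow> map f xs \<in> snd T i" using assms(1) i xs unfolding is_embedding_def by blast
  have "length (map f xs) = \<mu> i \<and> set (map f xs) \<subseteq> fst T'" using xs assms(2) by auto
  then have "map f xs \<in> snd T i \<longleftrightarrow> map f xs \<in> snd T' i" using assms(3) i by blast
  then show "xs \<in> snd S i \<longleftrightarrow> map f xs \<in> snd T' i" using 1 by simp
qed

lemma at_most_one_finite: "\<forall>a\<in>A. \<forall>b\<in>A. a = b \<Longrightarrow> finite A"
proof (cases "A = {}")
  case False
  then obtain a where "a \<in> A" by blast
  moreover assume "\<forall>a\<in>A. \<forall>b\<in>A. a = b"
  ultimately have "A \<subseteq> {a}" by blast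
  then show ?thesis using finite_subset by blast
qed simp

context
  fixes I :: "'i set" and \<mu> :: "'i \<Rightarrow> nat" and j0 :: 'i
  assumes mu: "\<forall>i\<in>I. \<mu> i \<ge> 1" and j0I: "j0 \<in> I" and j0mu: "2 \<le> \<mu> j0"
begin

definition Xs :: "'i struc" where
  "Xs = ({0}, \<lambda>i. if i = j0 then {replicate (\<mu> j0) 0} else {})"
definition Ys :: "'i struc" where
  "Ys = ({1}, \<lambda>i. {})"
definition Zs :: "'i \<Rightarrow> 'i struc" where
  "Zs n = ({0,1}, \<lambda>i. (if i = j0 then {replicate (\<mu> j0) 0} else {}) \<union>
      (if i = n then {xs. length xs = \<mu> n \<and> set xs = {0,1}} else {}))"

lemma wf_Xs: "wf_struc I \<mu> Xs" unfolding wf_struc_def Xs_def using j0I by auto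
lemma wf_Ys: "wf_struc I \<mu> Ys" unfolding wf_struc_def Ys_def by auto
lemma wf_Zs:
  assumes nI: "n \<in> I" shows "wf_struc I \<mu> (Zs n)"
  unfolding wf_struc_def
proof (intro conjI ballI allI impI)
  show "finite (fst (Zs n))" unfolding Zs_def by simp
  fix i assume i: "i \<in> I"
  have a: "(if i = j0 then {replicate (\<mu> j0) (0::nat)} else {}) \<subseteq> {xs. length xs = \<mu> i \<and> set xs \<subseteq> {0,1}}"
    by (cases "i = j0") (simp_all add: set_replicate_conv_if)
  have b: "(if i = n then {xs. length xs = \<mu> n \<and> set xs = {0::nat,1}} else {}) \<subseteq> {xs. length xs = \<mu> i \<and> set xs \<subseteq> {0,1}}"
    by (cases "i = n") (simp_all add: subset_iff)
  show "snd (Zs n) i \<subseteq> {xs. length xs = \<mu> i \<and> set xs \<subseteq> fst (Zs n)}"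
    unfolding Zs_def using a b by simp
next
  fix i assume "i \<notin> I"
  then have "i \<noteq> j0" "i \<noteq> n" using j0I nI by auto
  then show "snd (Zs n) i = {}" unfolding Zs_def by simp
qed

lemma emb_XZ: "n \<noteq> j0 \<Longrightarrow> is_embedding I \<mu> id Xs (Zs n)"
  unfolding is_embedding_def Xs_def Zs_def by auto

lemma emb_YZ: "is_embedding I \<mu> id Ys (Zs n)"
  unfolding is_embedding_def Ys_def Zs_def
proof (intro conjI ballI allI impI)
  fix i xs assume i: "i \<in> I" and xs: "length xs = \<mu> i \<and> set xs \<subseteq> fst ({1::nat}, \<lambda>i::'i. {}::nat list set)"
  have "0 \<notin> set xs" using xs by auto
  moreover have "0 \<in> set (replicate (\<mu> j0) (0::nat))" using j0mu by simp
  ultimately show "xs \<in> snd ({1::nat}, \<lambda>i::'i. {}::nat list set) i \<longleftrightarrow>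
    map id xs \<in> snd ({0, 1}, \<lambda>i. (if i = j0 then {replicate (\<mu> j0) 0} else {}) \<union>
      (if i = n then {xs. length xs = \<mu> n \<and> set xs = {0, 1}} else {})) i"
    by auto
qed auto

lemma not_YX: "\<not> embeds I \<mu> Ys Xs"
proof
  assume "embeds I \<mu> Ys Xs"
  then obtain f where f: "is_embedding I \<mu> f Ys Xs" unfolding embeds_def by blast
  have f1: "f 1 = 0" using f unfolding is_embedding_def Ys_def Xs_def by auto
  have "length (replicate (\<mu> j0) (1::nat)) = \<mu> j0 \<and> set (replicate (\<mu> j0) (1::nat)) \<subseteq> fst Ys"
    unfolding Ys_def by auto
  then have "replicate (\<mu> j0) (1::nat) \<in> snd Ys j0 \<longleftrightarrow> map f (replicate (\<mu> j0) 1) \<in> snd Xs j0"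
    using f j0I unfolding is_embedding_def by blast
  then show False using f1 unfolding Ys_def Xs_def by simp
qed

lemma not_XY: "\<not> embeds I \<mu> Xs Ys"
proof
  assume "embeds I \<mu> Xs Ys"
  then obtain f where f: "is_embedding I \<mu> f Xs Ys" unfolding embeds_def by blast
  have "length (replicate (\<mu> j0) (0::nat)) = \<mu> j0 \<and> set (replicate (\<mu> j0) (0::nat)) \<subseteq> fst Xs"
    unfolding Xs_def by auto
  then have "replicate (\<mu> j0) (0::nat) \<in> snd Xs j0 \<longleftrightarrow> map f (replicate (\<mu> j0) 0) \<in> snd Ys j0"
    using f j0I unfolding is_embedding_def by blast
  then show False unfolding Ys_def Xs_def by simp
qed

definition "Dset n = {W \<in> Omega I \<mu>. omega_le I \<mu> W (cls I \<mu> (Zs n))}"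
definition "Lset = {W \<in> Omega I \<mu>. omega_le I \<mu> W (cls I \<mu> Xs) \<or> omega_le I \<mu> W (cls I \<mu> Ys)}"

lemma ideal_D:
  assumes nI: "n \<in> I" shows "is_ideal I \<mu> (Dset n)"
proof -
  define Z where "Z = cls I \<mu> (Zs n)"
  have Z: "Z \<in> Omega I \<mu>" unfolding Z_def using cls_Omega wf_Zs nI by blast
  have ZD: "Z \<in> Dset n" unfolding Dset_def Z_def[symmetric] using Z omega_le_refl by blast
  show ?thesis unfolding is_ideal_def
  proof (intro conjI ballI impI)
    show "Dset n \<subseteq> Omega I \<mu>" unfolding Dset_def by blast
    show "Dset n \<noteq> {}" using ZD by blast
    fix X Y assume "X \<in> Dset n" "Y \<in> Omega I \<mu>" "omega_le I \<mu> Y X"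
    then show "Y \<in> Dset n" unfolding Dset_def using omega_le_trans Z Z_def by blast
  next
    fix X Y assume "X \<in> Dset n" "Y \<in> Dset n"
    then show "\<exists>Z\<in>Dset n. omega_le I \<mu> X Z \<and> omega_le I \<mu> Y Z"
      using ZD unfolding Dset_def Z_def by blast
  qed
qed

lemma XO: "cls I \<mu> Xs \<in> Omega I \<mu>" using cls_Omega wf_Xs by blast
lemma YO: "cls I \<mu> Ys \<in> Omega I \<mu>" using cls_Omega wf_Ys by blast

lemma L_not_ideal: "\<not> is_ideal I \<mu> Lset"
proof
  assume id: "is_ideal I \<mu> Lset"
  define X where "X = cls I \<mu> Xs"
  define Y where "Y = cls I \<mu> Ys"
  have X: "X \<in> Omega I \<mu>" and Y: "Y \<in> Omega I \<mu>" unfolding X_def Y_def using XO YO by auto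
  have "X \<in> Lset" "Y \<in> Lset" unfolding Lset_def X_def[symmetric] Y_def[symmetric]
    using X Y omega_le_refl by auto
  then obtain Z where Z: "Z \<in> Lset" "omega_le I \<mu> X Z" "omega_le I \<mu> Y Z"
    using id unfolding is_ideal_def by blast
  have ZO: "Z \<in> Omega I \<mu>" using Z unfolding Lset_def by blast
  have xs: "Xs \<in> X" and ys: "Ys \<in> Y" unfolding X_def Y_def using cls_self[OF wf_Xs] cls_self[OF wf_Ys] by blast+
  from Z(1) have "omega_le I \<mu> Z X \<or> omega_le I \<mu> Z Y" unfolding Lset_def X_def Y_def by blast
  then show False
  proof
    assume "omega_le I \<mu> Z X"
    then have "omega_le I \<mu> Y X" using omega_le_trans Y ZO X Z(3) by blast
    then show False using omega_le_iff[OF Y X ys xs] not_YX by simp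
  next
    assume "omega_le I \<mu> Z Y"
    then have "omega_le I \<mu> X Y" using omega_le_trans Y ZO X Z(2) by blast
    then show False using omega_le_iff[OF X Y xs ys] not_XY by simp
  qed
qed

lemma L_sub_D:
  assumes nI: "n \<in> I" and nj: "n \<noteq> j0" and W: "W \<in> Lset"
  shows "W \<in> Dset n"
proof -
  define Z where "Z = cls I \<mu> (Zs n)"
  have Z: "Z \<in> Omega I \<mu>" unfolding Z_def using cls_Omega wf_Zs nI by blast
  have zs: "Zs n \<in> Z" unfolding Z_def using cls_self wf_Zs nI by blast
  have xs: "Xs \<in> cls I \<mu> Xs" and ys: "Ys \<in> cls I \<mu> Ys" using cls_self[OF wf_Xs] cls_self[OF wf_Ys] by blast+
  have "omega_le I \<mu> (cls I \<mu> Xs) Z"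
    using omega_le_iff[OF XO Z xs zs] emb_XZ[OF nj] unfolding embeds_def by blast
  moreover have "omega_le I \<mu> (cls I \<mu> Ys) Z"
    using omega_le_iff[OF YO Z ys zs] emb_YZ unfolding embeds_def by blast
  moreover have WO: "W \<in> Omega I \<mu>" using W unfolding Lset_def by blast
  ultimately show ?thesis using W omega_le_trans[OF WO _ Z] XO YO
    unfolding Dset_def Lset_def Z_def by blast
qed

lemma D_unique:
  assumes WO: "W \<in> Omega I \<mu>" and WL: "W \<notin> Lset"
    and n: "n \<in> I" "2 \<le> \<mu> n" "n \<noteq> j0" and m: "m \<in> I" "m \<noteq> j0"
    and Wn: "W \<in> Dset n" and Wm: "W \<in> Dset m"
  shows "n = m"
proof (rule ccontr)
  assume nm: "n \<noteq> m"
  obtain S where S: "S \<in> W" using Omega_ne WO by blast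
  have zn: "Zs n \<in> cls I \<mu> (Zs n)" using cls_self wf_Zs n by blast
  have zm: "Zs m \<in> cls I \<mu> (Zs m)" using cls_self wf_Zs m by blast
  obtain f where f: "is_embedding I \<mu> f S (Zs n)"
    using Wn omega_le_iff[OF WO cls_Omega[OF wf_Zs[OF n(1)]] S zn] unfolding Dset_def embeds_def by blast
  obtain g where g: "is_embedding I \<mu> g S (Zs m)"
    using Wm omega_le_iff[OF WO cls_Omega[OF wf_Zs[OF m(1)]] S zm] unfolding Dset_def embeds_def by blast
  have fim: "f ` fst S \<subseteq> {0,1}" using f unfolding is_embedding_def Zs_def by simp
  have xs: "Xs \<in> cls I \<mu> Xs" and ys: "Ys \<in> cls I \<mu> Ys" using cls_self[OF wf_Xs] cls_self[OF wf_Ys] by blast+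
  show False
  proof (cases "f ` fst S \<subseteq> {0}")
    case True
    have "is_embedding I \<mu> f S Xs"
      by (rule emb_sub[OF f]) (use True in \<open>auto simp: Xs_def Zs_def\<close>)
    then have "omega_le I \<mu> W (cls I \<mu> Xs)" using omega_le_iff[OF WO XO S xs] unfolding embeds_def by blast
    then show False using WL WO unfolding Lset_def by blast
  next
    case False1: False
    show False
    proof (cases "f ` fst S \<subseteq> {1}")
      case True
      have "is_embedding I \<mu> f S Ys"
      proof (rule emb_sub[OF f])
        show "f ` fst S \<subseteq> fst Ys" using True unfolding Ys_def by simp
        show "\<forall>i\<in>I. \<forall>ys. length ys = \<mu> i \<and> set ys \<subseteq> fst Ys \<longrightarrow> (ys \<in> snd (Zs n) i) = (ys \<in> snd Ys i)"
        proof (intro ballI allI impI)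
          fix i ys assume "i \<in> I" "length ys = \<mu> i \<and> set ys \<subseteq> fst Ys"
          then have "0 \<notin> set ys" unfolding Ys_def by auto
          moreover have "0 \<in> set (replicate (\<mu> j0) (0::nat))" using j0mu by simp
          ultimately show "(ys \<in> snd (Zs n) i) = (ys \<in> snd Ys i)" unfolding Zs_def Ys_def by auto
        qed
      qed
      then have "omega_le I \<mu> W (cls I \<mu> Ys)" using omega_le_iff[OF WO YO S ys] unfolding embeds_def by blast
      then show False using WL WO unfolding Lset_def by blast
    next
      case False
      obtain a where a0: "a \<in> fst S" "f a \<notin> {1}" using False by (meson image_subsetI)
      have "f a \<in> {0,1}" using fim a0(1) by (meson image_subset_iff)
      then have a: "a \<in> fst S" "f a = 0" using a0 by auto
      obtain b where b0: "b \<in> fst S" "f b \<notin> {0}" using False1 by (meson image_subsetI)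
      have "f b \<in> {0,1}" using fim b0(1) by (meson image_subset_iff)
      then have b: "b \<in> fst S" "f b = 1" using b0 by auto
      define xs where "xs = a # replicate (\<mu> n - 1) b"
      have len: "length xs = \<mu> n" unfolding xs_def using n by simp
      have setxs: "set xs = {a, b}" unfolding xs_def using n by auto
      have sub: "set xs \<subseteq> fst S" using setxs a b by simp
      have embf: "\<forall>i\<in>I. \<forall>xs. length xs = \<mu> i \<and> set xs \<subseteq> fst S \<longrightarrow> (xs \<in> snd S i \<longleftrightarrow> map f xs \<in> snd (Zs n) i)"
        using f unfolding is_embedding_def by blast
      have embg: "\<forall>i\<in>I. \<forall>xs. length xs = \<mu> i \<and> set xs \<subseteq> fst S \<longrightarrow> (xs \<in> snd S i \<longleftrightarrow> map g xs \<in> snd (Zs m) i)"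
        using g unfolding is_embedding_def by blast
      have "map f xs = 0 # replicate (\<mu> n - 1) 1" unfolding xs_def using a b by simp
      then have "set (map f xs) = {0,1}" using n by auto
      then have "map f xs \<in> snd (Zs n) n" using len unfolding Zs_def by simp
      moreover have "xs \<in> snd S n \<longleftrightarrow> map f xs \<in> snd (Zs n) n"
        using embf n(1) len sub by blast
      ultimately have "xs \<in> snd S n" by simp
      moreover have "xs \<in> snd S n \<longleftrightarrow> map g xs \<in> snd (Zs m) n"
        using embg n(1) len sub by blast
      ultimately have "map g xs \<in> snd (Zs m) n" by simp
      then show False using nm n(3) unfolding Zs_def by simp
    qed
  qed
qed


lemma not_compact:
  assumes infJ: "infinite {i\<in>I. 2 \<le> \<mu> i}"
  shows "\<not> compactin (powerset_topology (Omega I \<mu>)) (char_fun (Omega I \<mu>) ` ideals I \<mu>)"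
proof
  define \<Omega> where "\<Omega> = Omega I \<mu>"
  define P where "P = powerset_topology \<Omega>"
  define K where "K = char_fun \<Omega> ` ideals I \<mu>"
  define J where "J = {i\<in>I. 2 \<le> \<mu> i} - {j0}"
  assume "compactin (powerset_topology (Omega I \<mu>)) (char_fun (Omega I \<mu>) ` ideals I \<mu>)"
  then have "closedin P K" unfolding P_def K_def \<Omega>_def using compactin_imp_closedin Hausdorff_P by blast
  then have op: "openin P (topspace P - K)" by (simp add: closedin_def)
  define cL where "cL = char_fun \<Omega> Lset"
  have LO: "Lset \<subseteq> \<Omega>" unfolding Lset_def \<Omega>_def by blast
  have cLK: "cL \<notin> K"
  proof
    assume "cL \<in> K"
    then obtain D where D: "is_ideal I \<mu> D" "cL = char_fun \<Omega> D" unfolding K_def ideals_def by blast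
    have "D \<subseteq> \<Omega>" using D unfolding is_ideal_def \<Omega>_def by blast
    then have "Lset = D" using char_inj LO D(2) unfolding cL_def by blast
    then show False using D L_not_ideal by simp
  qed
  have "cL \<in> topspace P" unfolding cL_def P_def by (rule char_in)
  then have "cL \<in> topspace P - K" using cLK by blast
  moreover have "\<forall>x\<in>topspace P - K. \<exists>U. finite {i \<in> \<Omega>. U i \<noteq> topspace (discrete_topology (UNIV::bool set))} \<and>
      (\<forall>i \<in> \<Omega>. openin (discrete_topology UNIV) (U i)) \<and> x \<in> PiE \<Omega> U \<and> PiE \<Omega> U \<subseteq> topspace P - K"
    using op unfolding P_def powerset_topology_def openin_product_topology_alt by blast
  ultimately obtain U where U0: "finite {i \<in> \<Omega>. U i \<noteq> topspace (discrete_topology (UNIV::bool set))}"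
     "cL \<in> PiE \<Omega> U" "PiE \<Omega> U \<subseteq> topspace P - K" by blast
  have U: "finite {x\<in>\<Omega>. U x \<noteq> UNIV}" "cL \<in> PiE \<Omega> U" "PiE \<Omega> U \<subseteq> topspace P - K"
    using U0 by simp_all
  define F where "F = {x\<in>\<Omega>. U x \<noteq> UNIV}"
  define bad where "bad = (\<Union>x\<in>F - Lset. {n\<in>J. x \<in> Dset n})"
  have finbad: "finite bad" unfolding bad_def
  proof (rule finite_UN_I)
    show "finite (F - Lset)" using U(1) unfolding F_def by simp
    fix x assume x: "x \<in> F - Lset"
    show "finite {n\<in>J. x \<in> Dset n}"
    proof (rule at_most_one_finite, intro ballI)
      fix a b assume a: "a \<in> {n\<in>J. x \<in> Dset n}" and b: "b \<in> {n\<in>J. x \<in> Dset n}"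
      show "a = b" using D_unique[of x a b] a b x unfolding J_def F_def \<Omega>_def by blast
    qed
  qed
  have "infinite J" unfolding J_def using infJ by simp
  then have "infinite (J - bad)" using finbad Diff_infinite_finite by blast
  then obtain n where n: "n \<in> J" "n \<notin> bad" by (metis Diff_iff ex_in_conv finite.emptyI)
  have nI: "n \<in> I" "n \<noteq> j0" using n unfolding J_def by auto
  have "char_fun \<Omega> (Dset n) \<in> PiE \<Omega> U"
  proof (rule PiE_I)
    fix x assume x: "x \<in> \<Omega>"
    show "char_fun \<Omega> (Dset n) x \<in> U x"
    proof (cases "U x = UNIV")
      case True then show ?thesis by simp
    next
      case False
      then have xF: "x \<in> F" unfolding F_def using x by blast
      have "x \<in> Dset n \<longleftrightarrow> x \<in> Lset"
      proof
        assume "x \<in> Dset n"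
        then show "x \<in> Lset" using n xF unfolding bad_def by blast
      next
        assume "x \<in> Lset" then show "x \<in> Dset n" using L_sub_D nI by blast
      qed
      moreover have "cL x \<in> U x" using U(2) x by blast
      ultimately show ?thesis unfolding cL_def using char_app[OF x, of "Dset n"] char_app[OF x, of Lset] by simp
    qed
  next
    fix x assume "x \<notin> \<Omega>" then show "char_fun \<Omega> (Dset n) x = undefined" unfolding char_fun_def by simp
  qed
  then have "char_fun \<Omega> (Dset n) \<notin> K" using U(3) by blast
  moreover have "char_fun \<Omega> (Dset n) \<in> K" unfolding K_def ideals_def using ideal_D[OF nI(1)] by blast
  ultimately show False by blast
qed

end


theorem lemma7:
  fixes I :: "'i set" and \<mu> :: "'i \<Rightarrow> nat"
  assumes "\<forall>i\<in>I. \<mu> i \<ge> 1"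
  shows "compactin (powerset_topology (Omega I \<mu>)) (char_fun (Omega I \<mu>) ` ideals I \<mu>)
     \<longleftrightarrow> finite {i\<in>I. \<mu> i \<ge> 2}"
proof
  assume c: "compactin (powerset_topology (Omega I \<mu>)) (char_fun (Omega I \<mu>) ` ideals I \<mu>)"
  show "finite {i\<in>I. \<mu> i \<ge> 2}"
  proof (rule ccontr)
    assume inf: "infinite {i\<in>I. \<mu> i \<ge> 2}"
    then obtain j0 where "j0 \<in> {i\<in>I. \<mu> i \<ge> 2}" by (metis ex_in_conv finite.emptyI)
    then have "j0 \<in> I" "2 \<le> \<mu> j0" by auto
    from not_compact[OF assms this inf] c show False by blast
  qed
next
  assume "finite {i\<in>I. \<mu> i \<ge> 2}"
  then show "compactin (powerset_topology (Omega I \<mu>)) (char_fun (Omega I \<mu>) ` ideals I \<mu>)"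
    using closedin_compact_space[OF compact_P ideals_closed[OF assms]] by blast
qed

end
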